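(* Let $Y_1=1$ and, for $n\ge2$, $Y_n=\lfloor (n+I)/2\rfloor$ where $I$ is a Bernoulli$(1/2)$ random variable, and let $X_n$ be the number of rounds of the associated leader election process ($X_1=0$, $X_n\overset d=X_{Y_n}+1$ with independent $Y_n$). Then for all $n\ge1$ and all $k\in\mathbb Z$, $\Pr(X_n\le k)=F(k-\log_2 n)$ exactly, where $F(x)=0$ for $x\le-1$, $F(x)=2-2^{-x}$ for $-1\le x\le0$, $F(x)=1$ for $x\ge0$. Moreover $\mathbb E X_n=\log_2 n+\phi(n)$ exactly for $n\ge1$, where $\phi(2^x)=2^{x-\lfloor x\rfloor}-(x-\lfloor x\rfloor)-1$.
   Context: The process: starting with $N_0=n$ players, $N_{k+1}$ has the law of $Y_{N_k}$ given the past, and $X_n=\min\{k:N_k=1\}$. *)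

theory Defs
  imports "HOL-Probability.Probability"
begin

definition Ylaw :: "nat \<Rightarrow> nat pmf" where
  "Ylaw n = (if n = 1 then return_pmf 1
             else map_pmf (\<lambda>b. (n + of_bool b) div 2) (bernoulli_pmf (1/2)))"

lemma Ylaw_less: "2 \<le> n \<Longrightarrow> m \<in> set_pmf (Ylaw n) \<Longrightarrow> m < n"
  by (auto simp: Ylaw_def)

text \<open>Law of X_n: X_1 = 0 and X_n =d X_{Y_n} + 1 (Y_n independent).
  The value at n = 0 is an irrelevant convention.\<close>
function Xlaw :: "nat \<Rightarrow> nat pmf" where
  "Xlaw n = (if n \<le> 1 then return_pmf 0
             else bind_pmf (Ylaw n) (\<lambda>m. map_pmf Suc (Xlaw m)))"
  by auto
termination
  by (relation "Wellfounded.measure id") (auto intro: Ylaw_less)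

definition F :: "real \<Rightarrow> real" where
  "F x = (if x \<le> -1 then 0 else if x \<le> 0 then 2 - 2 powr (-x) else 1)"

definition phi :: "nat \<Rightarrow> real" where
  "phi n = (let x = log 2 (real n); t = x - real_of_int \<lfloor>x\<rfloor> in 2 powr t - t - 1)"

end

theory Submission
  imports Defs
begin

lemma ennr_half: fixes a b :: real assumes "a \<ge> 0" "b \<ge> 0"
  shows "ennreal a * inverse 2 + ennreal b * inverse 2 = ennreal ((a+b)/2)"
proof -
  have "ennreal ((a+b)/2) = ennreal (a+b) / ennreal 2" using assms by (subst divide_ennreal) auto
  also have "\<dots> = (ennreal a + ennreal b) * inverse 2" using assms by (simp add: ennreal_plus divide_ennreal_def)
  finally show ?thesis by (simp add: distrib_right)
qed

lemma bind_bern_half: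
  "measure_pmf.prob (bind_pmf (bernoulli_pmf (1/2)) f) A
     = (measure_pmf.prob (f True) A + measure_pmf.prob (f False) A) / 2"
proof -
  have "emeasure (measure_pmf (bind_pmf (bernoulli_pmf (1/2)) f)) A
      = ennreal ((measure_pmf.prob (f True) A + measure_pmf.prob (f False) A) / 2)"
    by (subst emeasure_bind_pmf, subst nn_integral_bernoulli_pmf, simp_all)
       (simp add: measure_pmf.emeasure_eq_measure ennr_half)
  hence "ennreal (measure_pmf.prob (bind_pmf (bernoulli_pmf (1/2)) f) A)
      = ennreal ((measure_pmf.prob (f True) A + measure_pmf.prob (f False) A) / 2)"
    by (simp only: measure_pmf.emeasure_eq_measure)
  then show ?thesis by (subst (asm) ennreal_inj) auto
qed

definition H :: "nat \<Rightarrow> nat \<Rightarrow> real" where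
  "H n k = max 0 (min 1 (2 - real n / 2^k))"

lemma clamp_avg:
  fixes x y :: real
  assumes "x \<le> y" "\<not> (x < 1 \<and> 1 < y)" "\<not> (x < 2 \<and> 2 < y)"
  shows "(max 0 (min 1 (2 - y)) + max 0 (min 1 (2 - x))) / 2 = max 0 (min 1 (2 - (x+y)/2))"
  using assms unfolding max_def min_def by (auto split: if_split) (auto simp: field_simps)

lemma H_step: "n \<ge> 2 \<Longrightarrow> (H ((n+1) div 2) k + H (n div 2) k) / 2 = H n (Suc k)"
proof -
  assume n: "n \<ge> 2"
  define a where "a = (2::nat)^k"
  have a: "a \<ge> 1" unfolding a_def by simp
  have ak: "(2::real)^k = real a" unfolding a_def by simp
  have ap: "real a > 0" using a by simp
  show ?thesis
  proof (cases "even n")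
    case True
    then obtain r where r: "n = 2*r" by blast
    have "(n+1) div 2 = r" "n div 2 = r" using r by auto
    then show ?thesis unfolding H_def using r by (simp add: ak field_simps)
  next
    case False
    then obtain r where r: "n = 2*r+1" using oddE by blast
    have e: "(n+1) div 2 = r+1" "n div 2 = r" using r by auto
    have c: "r + 1 \<le> a \<or> (a \<le> r \<and> r + 1 \<le> 2*a) \<or> 2*a \<le> r" by linarith
    hence c': "real r + 1 \<le> a \<or> (a \<le> real r \<and> real r + 1 \<le> 2*a) \<or> 2*a \<le> real r"
      by (metis of_nat_1 of_nat_add of_nat_le_iff of_nat_mult of_nat_numeral)
    have xy: "real r / a \<le> (real r + 1) / a" using ap by (simp add: divide_right_mono)
    have c1: "\<not> (real r / a < 1 \<and> 1 < (real r + 1) / a)"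
      using c' ap by (auto simp: field_simps)
    have c2: "\<not> (real r / a < 2 \<and> 2 < (real r + 1) / a)"
      using c' ap by (auto simp: field_simps)
    have m: "(real r / a + (real r + 1) / a) / 2 = real (2*r+1) / 2^Suc k"
      using ap by (simp add: ak field_simps)
    have h1: "H (r+1) k = max 0 (min 1 (2 - (real r+1)/a))" by (simp add: H_def ak add.commute)
    have h2: "H r k = max 0 (min 1 (2 - real r/a))" by (simp add: H_def ak)
    have h3: "H n (Suc k) = max 0 (min 1 (2 - (real r / a + (real r + 1) / a) / 2))"
      unfolding r H_def m ..
    show ?thesis unfolding e h1 h2 h3 using clamp_avg[OF xy c1 c2] .
  qed
qed

declare Xlaw.simps[simp del]

lemma Xcdf: "n \<ge> 1 \<Longrightarrow> measure_pmf.prob (Xlaw n) {x. x \<le> k} = H n k"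
proof (induction n arbitrary: k rule: less_induct)
  case (less n)
  show ?case
  proof (cases "n = 1")
    case True
    have "Xlaw n = return_pmf 0" using True by (subst Xlaw.simps) simp
    moreover have "(1::real) / 2^k \<le> 1" by simp
    ultimately show ?thesis using True unfolding H_def by simp
  next
    case False
    hence n2: "n \<ge> 2" using less.prems by simp
    have X: "Xlaw n = bind_pmf (bernoulli_pmf (1/2))
       (\<lambda>b. map_pmf Suc (Xlaw ((n + of_bool b) div 2)))"
      using n2 by (subst Xlaw.simps) (simp add: Ylaw_def bind_map_pmf o_def)
    have P: "measure_pmf.prob (Xlaw n) {x. x \<le> k} =
      (measure_pmf.prob (Xlaw ((n+1) div 2)) (Suc -` {x. x \<le> k})
       + measure_pmf.prob (Xlaw (n div 2)) (Suc -` {x. x \<le> k})) / 2"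
      unfolding X bind_bern_half by simp
    show ?thesis
    proof (cases k)
      case 0
      have "real n \<ge> 2" using n2 by simp
      moreover have "Suc -` {x. x \<le> k} = {}" using 0 by auto
      ultimately show ?thesis unfolding P unfolding 0 H_def by simp
    next
      case (Suc k')
      have s: "Suc -` {x. x \<le> k} = {x. x \<le> k'}" using Suc by auto
      have i1: "measure_pmf.prob (Xlaw ((n+1) div 2)) {x. x \<le> k'} = H ((n+1) div 2) k'"
        by (rule less.IH) (use n2 in auto)
      have i2: "measure_pmf.prob (Xlaw (n div 2)) {x. x \<le> k'} = H (n div 2) k'"
        by (rule less.IH) (use n2 in auto)
      have "measure_pmf.prob (Xlaw n) {x. x \<le> k} = H n (Suc k')" unfolding P s i1 i2 H_step[OF n2] ..
      thus ?thesis using Suc by simp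
    qed
  qed
qed

lemma F_log: "q > 0 \<Longrightarrow> F (- log 2 q) = max 0 (min 1 (2 - q))"
proof -
  assume q: "q > 0"
  have a: "- log 2 q \<le> -1 \<longleftrightarrow> 2 \<le> q" using le_log_iff[of 2 q 1] q by auto
  have b: "- log 2 q \<le> 0 \<longleftrightarrow> 1 \<le> q" using le_log_iff[of 2 q 0] q by auto
  show ?thesis unfolding F_def using a b q by auto
qed

lemma HF: "n \<ge> 1 \<Longrightarrow> H n k = F (real k - log 2 (real n))"
proof -
  assume n: "n \<ge> 1"
  define q where "q = real n / 2^k"
  have q: "q > 0" using n by (simp add: q_def)
  have "real n = q * 2^k" by (simp add: q_def)
  hence "log 2 (real n) = log 2 q + real k" using q by (simp add: log_mult log_nat_power)
  hence "real k - log 2 (real n) = - log 2 q" by simp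
  thus ?thesis using F_log[OF q] by (simp add: H_def q_def)
qed

theorem mainTheorem6:
  shows "(\<forall>n::nat. n \<ge> 1 \<longrightarrow> (\<forall>k::int.
            measure_pmf.prob (Xlaw n) {x. int x \<le> k} = F (real_of_int k - log 2 (real n))))
       \<and> (\<forall>n::nat. n \<ge> 1 \<longrightarrow>
            measure_pmf.expectation (Xlaw n) real = log 2 (real n) + phi n)"
proof (intro conjI allI impI)
  fix n :: nat and k :: int
  assume n: "n \<ge> 1"
  show "measure_pmf.prob (Xlaw n) {x. int x \<le> k} = F (real_of_int k - log 2 (real n))"
  proof (cases "k < 0")
    case True
    have "{x. int x \<le> k} = {}" using True by auto
    moreover have "log 2 (real n) \<ge> 0" using n by simp
    moreover have "real_of_int k \<le> -1" using True by simp
    ultimately show ?thesis unfolding F_def by simp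
  next
    case False
    then obtain k' where k: "k = int k'" by (metis nonneg_int_cases not_less)
    have "{x. int x \<le> k} = {x. x \<le> k'}" using k by auto
    then show ?thesis using Xcdf[OF n, of k'] HF[OF n, of k'] k by simp
  qed
next
  fix n :: nat
  assume n: "n \<ge> 1"
  obtain m where m: "2^m \<le> n" "n < 2^(m+1)" using ex_power_ivl1[of 2 n] n by auto
  define q where "q = real n / 2^m"
  have rm: "(2::real)^m \<le> real n" "real n < 2^(m+1)"
    using m by (metis of_nat_le_iff of_nat_numeral of_nat_power, metis of_nat_less_iff of_nat_numeral of_nat_power)
  have q1: "1 \<le> q" "q < 2" using rm by (simp_all add: q_def field_simps)
  have Pm: "measure_pmf.prob (Xlaw n) {x. x \<le> m} = 2 - q"
    using Xcdf[OF n, of m] q1 unfolding H_def q_def by simp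
  have Pm1: "measure_pmf.prob (Xlaw n) {x. x \<le> m+1} = 1"
  proof -
    have "real n / 2^(m+1) < 1" using rm by simp
    thus ?thesis using Xcdf[OF n, of "m+1"] unfolding H_def by simp
  qed
  have supp: "set_pmf (Xlaw n) \<subseteq> {m, m+1}"
  proof
    fix x assume x: "x \<in> set_pmf (Xlaw n)"
    have "measure_pmf.prob (Xlaw n) (UNIV - {x. x \<le> m+1}) = 0"
      using Pm1 measure_pmf.prob_compl[of "{x. x \<le> m+1}" "Xlaw n"] by simp
    hence "set_pmf (Xlaw n) \<inter> (UNIV - {x. x \<le> m+1}) = {}" by (simp add: measure_pmf_zero_iff)
    hence x1: "x \<le> m+1" using x by blast
    have x2: "x \<ge> m"
    proof (cases m)
      case 0 thus ?thesis by simp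
    next
      case (Suc m')
      have "real n / 2^m' \<ge> 2" using rm Suc by (simp add: field_simps)
      hence "measure_pmf.prob (Xlaw n) {x. x \<le> m'} = 0"
        using Xcdf[OF n, of m'] unfolding H_def by simp
      hence "set_pmf (Xlaw n) \<inter> {x. x \<le> m'} = {}" by (simp add: measure_pmf_zero_iff)
      thus ?thesis using x Suc by fastforce
    qed
    show "x \<in> {m, m+1}" using x1 x2 by auto
  qed
  have "{x. x \<le> m} \<inter> set_pmf (Xlaw n) = {m} \<inter> set_pmf (Xlaw n)" using supp by auto
  hence pm: "pmf (Xlaw n) m = 2 - q"
    using Pm measure_Int_set_pmf[of "Xlaw n" "{x. x \<le> m}"] measure_Int_set_pmf[of "Xlaw n" "{m}"]
    by (simp add: measure_pmf_single)
  have "{x. x \<le> m+1} \<inter> set_pmf (Xlaw n) = {m, m+1} \<inter> set_pmf (Xlaw n)" using supp by auto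
  hence "measure_pmf.prob (Xlaw n) {m, m+1} = 1"
    using Pm1 measure_Int_set_pmf[of "Xlaw n" "{x. x \<le> m+1}"] measure_Int_set_pmf[of "Xlaw n" "{m, m+1}"]
    by simp
  hence pm1: "pmf (Xlaw n) m + pmf (Xlaw n) (m+1) = 1"
    by (simp add: measure_measure_pmf_finite)
  have E: "measure_pmf.expectation (Xlaw n) real = real m * pmf (Xlaw n) m + real (m+1) * pmf (Xlaw n) (m+1)"
    using supp by (subst integral_measure_pmf_real[of "{m, m+1}"]) auto
  have E2: "measure_pmf.expectation (Xlaw n) real = real m - 1 + q"
  proof -
    have "pmf (Xlaw n) (m+1) = q - 1" using pm pm1 by simp
    thus ?thesis unfolding E pm by (simp only: \<open>pmf (Xlaw n) (m+1) = q - 1\<close>) (simp add: algebra_simps)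
  qed
  have qp: "q > 0" using q1 by simp
  have "real n = q * 2^m" by (simp add: q_def)
  hence lg: "log 2 (real n) = log 2 q + real m" using qp by (simp add: log_mult log_nat_power)
  have fl: "\<lfloor>log 2 (real n)\<rfloor> = int m"
    using floor_log_nat_eq_powr_iff[of 2 n m] m n by simp
  have "phi n = 2 powr (log 2 q) - log 2 q - 1"
    unfolding phi_def Let_def fl unfolding lg by simp
  hence "phi n = q - log 2 q - 1" using qp by simp
  thus "measure_pmf.expectation (Xlaw n) real = log 2 (real n) + phi n"
    using E2 lg by simp
qed

end
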